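(* Let $p$ be an odd prime, $q=p^m$, $q=et+1$ with integers $e\geq 2,t\geq 1$, $R_{e,q}=\mathbb{F}_q[u]/\langle u^e-1\rangle$, and let $\varphi:R_{e,q}^n\to\mathbb{F}_q^{en}$ be the Gray map defined by a matrix $M\in GL_e(\mathbb{F}_q)$ with $MM^T=\gamma I_e$, $\gamma\in\mathbb{F}_q^*$ (see context). Let $\mathcal{C}$ be a linear code of length $n$ over $R_{e,q}$ with $|\mathcal{C}|=q^{ek}$ and Gray distance $d_G$. Then: (1) $\varphi(\mathcal{C})$ is an $[en,ek,d_H]$ linear code over $\mathbb{F}_q$ with $d_H=d_G$; (2) $\varphi(\mathcal{C}^\perp)=(\varphi(\mathcal{C}))^\perp$; (3) if $\mathcal{C}$ is (Euclidean) self-orthogonal then $\varphi(\mathcal{C})$ is a (Euclidean) self-orthogonal linear code of length $en$ over $\mathbb{F}_q$; (4) $\varphi(\mathcal{C})$ is self-dual if and only if $\mathcal{C}$ is self-dual.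
   Context: Write $u^e-1=\prod_{i=1}^e(u-\alpha_i)$ over $\mathbb{F}_q$, $G_i=u-\alpha_i$, $\widehat{G}_i=(u^e-1)/G_i$, $z_iG_i+h_i\widehat{G}_i=1$, $\mu_i=h_i\widehat{G}_i$; these are pairwise orthogonal idempotents summing to $1$, and each $r\in R_{e,q}$ is uniquely $r=\sum_{i=1}^e s_i\mu_i$, $s_i\in\mathbb{F}_q$. The Gray map is $\varphi(r_0,\dots,r_{n-1})=(\boldsymbol{r_0}M,\dots,\boldsymbol{r_{n-1}}M)$ where $\boldsymbol{r_j}=(s_{j,1},\dots,s_{j,e})$ for $r_j=\sum_i s_{j,i}\mu_i$. A linear code is an $R_{e,q}$-submodule of $R_{e,q}^n$; $\mathcal{C}^\perp$ is taken with respect to the Euclidean inner product $x\cdot y=\sum_i x_iy_i$. Gray weight $w_G(r)=w_H(\varphi(r))$, Gray distance $d_G(c,c')=w_G(c-c')$, and $d_G$ of a code is the minimum over distinct codewords. *)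

theory Defs
  imports "HOL-Computational_Algebra.Polynomial" "HOL-Library.Function_Algebras" "HOL-Library.Cardinality"
begin

(* The modulus u^e - 1 of R_{e,q} = F_q[u]/<u^e - 1>.  Elements of R_{e,q} are represented
   by their canonical representatives: polynomials r with r mod (u^e - 1) = r. *)
definition umod :: "nat \<Rightarrow> 'a::field poly" where
  "umod e = monom 1 e - 1"

definition in_R :: "nat \<Rightarrow> 'a::field poly \<Rightarrow> bool" where
  "in_R e r \<longleftrightarrow> r mod umod e = r"

definition Gi :: "(nat \<Rightarrow> 'a::field) \<Rightarrow> nat \<Rightarrow> 'a poly" where
  "Gi \<alpha> i = [:- \<alpha> i, 1:]"

definition Ghat :: "nat \<Rightarrow> (nat \<Rightarrow> 'a::field) \<Rightarrow> nat \<Rightarrow> 'a poly" where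
  "Ghat e \<alpha> i = umod e div Gi \<alpha> i"

definition hcoef :: "nat \<Rightarrow> (nat \<Rightarrow> 'a::field) \<Rightarrow> nat \<Rightarrow> 'a poly" where
  "hcoef e \<alpha> i = (SOME h. \<exists>z. z * Gi \<alpha> i + h * Ghat e \<alpha> i = 1)"

definition mu :: "nat \<Rightarrow> (nat \<Rightarrow> 'a::field) \<Rightarrow> nat \<Rightarrow> 'a poly" where
  "mu e \<alpha> i = (hcoef e \<alpha> i * Ghat e \<alpha> i) mod umod e"

(* the unique (s_1,...,s_e) with r = sum_i s_i mu_i (indices shifted to 0..e-1) *)
definition coords :: "nat \<Rightarrow> (nat \<Rightarrow> 'a::field) \<Rightarrow> 'a poly \<Rightarrow> 'a list" where
  "coords e \<alpha> r = (THE s. length s = e \<and>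
       r = (\<Sum>i<e. smult (s ! i) (mu e \<alpha> i)) mod umod e)"

(* Words of length N over F_q: functions nat => 'a vanishing from index N on *)
definition Fwords :: "nat \<Rightarrow> (nat \<Rightarrow> 'a::zero) set" where
  "Fwords N = {x. \<forall>i\<ge>N. x i = 0}"

definition Rwords :: "nat \<Rightarrow> nat \<Rightarrow> (nat \<Rightarrow> 'a::field poly) set" where
  "Rwords e n = {c. (\<forall>j. in_R e (c j)) \<and> (\<forall>j\<ge>n. c j = 0)}"

(* Gray map: (r_0,...,r_{n-1}) |-> (r_0 M, ..., r_{n-1} M); block j occupies the
   positions j*e, ..., j*e + e - 1; M is given by its entries M i l, i,l < e. *)
definition gray :: "nat \<Rightarrow> (nat \<Rightarrow> 'a::field) \<Rightarrow> (nat \<Rightarrow> nat \<Rightarrow> 'a) \<Rightarrow> nat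
                     \<Rightarrow> (nat \<Rightarrow> 'a poly) \<Rightarrow> (nat \<Rightarrow> 'a)" where
  "gray e \<alpha> M n c = (\<lambda>idx. if idx < e * n then
       (\<Sum>i<e. coords e \<alpha> (c (idx div e)) ! i * M i (idx mod e)) else 0)"

definition R_linear_code :: "nat \<Rightarrow> nat \<Rightarrow> (nat \<Rightarrow> 'a::field poly) set \<Rightarrow> bool" where
  "R_linear_code e n C \<longleftrightarrow> C \<subseteq> Rwords e n \<and> C \<noteq> {} \<and>
     (\<forall>c\<in>C. \<forall>d\<in>C. c + d \<in> C) \<and>
     (\<forall>r. in_R e r \<longrightarrow> (\<forall>c\<in>C. (\<lambda>j. (r * c j) mod umod e) \<in> C))"

definition R_dual :: "nat \<Rightarrow> nat \<Rightarrow> (nat \<Rightarrow> 'a::field poly) set \<Rightarrow> (nat \<Rightarrow> 'a poly) set" where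
  "R_dual e n C = {d \<in> Rwords e n. \<forall>c\<in>C. (\<Sum>j<n. c j * d j) mod umod e = 0}"

definition fscale :: "'a::field \<Rightarrow> (nat \<Rightarrow> 'a) \<Rightarrow> (nat \<Rightarrow> 'a)" where
  "fscale a x = (\<lambda>i. a * x i)"

definition F_linear_code :: "nat \<Rightarrow> (nat \<Rightarrow> 'a::field) set \<Rightarrow> bool" where
  "F_linear_code N D \<longleftrightarrow> D \<subseteq> Fwords N \<and> 0 \<in> D \<and>
     (\<forall>x\<in>D. \<forall>y\<in>D. x + y \<in> D) \<and> (\<forall>a. \<forall>x\<in>D. fscale a x \<in> D)"

definition F_dim :: "(nat \<Rightarrow> 'a::field) set \<Rightarrow> nat" where
  "F_dim D = vector_space.dim fscale D"

definition F_dual :: "nat \<Rightarrow> (nat \<Rightarrow> 'a::field) set \<Rightarrow> (nat \<Rightarrow> 'a) set" where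
  "F_dual N D = {y \<in> Fwords N. \<forall>x\<in>D. (\<Sum>i<N. x i * y i) = 0}"

definition hamming_weight :: "nat \<Rightarrow> (nat \<Rightarrow> 'a::zero) \<Rightarrow> nat" where
  "hamming_weight N x = card {i. i < N \<and> x i \<noteq> 0}"

definition min_dist :: "nat \<Rightarrow> (nat \<Rightarrow> 'a::ab_group_add) set \<Rightarrow> nat" where
  "min_dist N D = Min {hamming_weight N (x - y) | x y. x \<in> D \<and> y \<in> D \<and> x \<noteq> y}"

definition gray_weight :: "nat \<Rightarrow> (nat \<Rightarrow> 'a::field) \<Rightarrow> (nat \<Rightarrow> nat \<Rightarrow> 'a) \<Rightarrow> nat
                     \<Rightarrow> (nat \<Rightarrow> 'a poly) \<Rightarrow> nat" where
  "gray_weight e \<alpha> M n c = hamming_weight (e * n) (gray e \<alpha> M n c)"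

definition gray_dist :: "nat \<Rightarrow> (nat \<Rightarrow> 'a::field) \<Rightarrow> (nat \<Rightarrow> nat \<Rightarrow> 'a) \<Rightarrow> nat
                     \<Rightarrow> (nat \<Rightarrow> 'a poly) set \<Rightarrow> nat" where
  "gray_dist e \<alpha> M n C = Min {gray_weight e \<alpha> M n (c - c') | c c'. c \<in> C \<and> c' \<in> C \<and> c \<noteq> c'}"

end

theory Submission
  imports Defs "HOL-Library.FuncSet"
begin

locale setup_R =
  fixes e :: nat and \<alpha> :: "nat \<Rightarrow> 'a::field"
  assumes inj: "inj_on \<alpha> {..<e}"
    and um: "umod e = (\<Prod>i<e. [:- \<alpha> i, 1:])"
    and e1: "e \<ge> 1"
begin

lemma umod_ne0: "umod e \<noteq> (0::'a poly)"
  using um by (simp add: prod_zero_iff)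

lemma deg_umod: "degree (umod e :: 'a poly) = e"
  unfolding um by (subst degree_prod_eq_sum_degree) auto

lemma inR_deg: "in_R e (r::'a poly) \<Longrightarrow> degree r < e"
proof -
  assume r: "in_R e r"
  show ?thesis
  proof (cases "r = 0")
    case True then show ?thesis using e1 by simp
  next
    case False
    then have "r mod umod e \<noteq> 0" using r unfolding in_R_def by simp
    then have "degree (r mod umod e) < degree (umod e :: 'a poly)"
      by (rule degree_mod_less'[OF umod_ne0])
    then show ?thesis using r unfolding in_R_def by (simp add: deg_umod)
  qed
qed

lemma inR_mod: "in_R e ((x::'a poly) mod umod e)"
  unfolding in_R_def by simp

lemma inR_0: "in_R e (0::'a poly)" unfolding in_R_def by simp

lemma inR_const: "in_R e [:a::'a:]"
  unfolding in_R_def using e1 by (intro mod_poly_less) (simp add: deg_umod)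

lemma inR_add: "in_R e (x::'a poly) \<Longrightarrow> in_R e y \<Longrightarrow> in_R e (x + y)"
  unfolding in_R_def by (simp add: poly_mod_add_left)

lemma inR_diff: "in_R e (x::'a poly) \<Longrightarrow> in_R e y \<Longrightarrow> in_R e (x - y)"
  unfolding in_R_def by (simp add: poly_mod_diff_left)

lemma poly_umod: "j < e \<Longrightarrow> poly (umod e) (\<alpha> j) = 0"
  unfolding um poly_prod by (rule prod_zero) auto

lemma poly_mod_umod: "j < e \<Longrightarrow> poly ((x::'a poly) mod umod e) (\<alpha> j) = poly x (\<alpha> j)"
proof -
  assume j: "j < e"
  have "x = (x div umod e) * umod e + x mod umod e" by simp
  then have "poly x (\<alpha> j) = poly (x div umod e) (\<alpha> j) * poly (umod e) (\<alpha> j) + poly (x mod umod e) (\<alpha> j)"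
    by (metis poly_add poly_mult)
  with poly_umod[OF j] show ?thesis by simp
qed

lemma card_img: "card (\<alpha> ` {..<e}) = e"
  using inj by (simp add: card_image)

lemma inR_eq: "in_R e (r::'a poly) \<Longrightarrow> in_R e r' \<Longrightarrow> (\<And>j. j < e \<Longrightarrow> poly r (\<alpha> j) = poly r' (\<alpha> j)) \<Longrightarrow> r = r'"
  by (rule poly_eqI_degree[of "\<alpha> ` {..<e}"]) (auto simp: card_img inR_deg)

lemma Ghat_eq: "i < e \<Longrightarrow> Ghat e \<alpha> i = (\<Prod>l\<in>{..<e}-{i}. [:- \<alpha> l, 1:])"
proof -
  assume i: "i < e"
  have "umod e = Gi \<alpha> i * (\<Prod>l\<in>{..<e}-{i}. [:- \<alpha> l, 1:])"
    unfolding um Gi_def using i by (subst prod.remove[of _ i]) auto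
  then have "Ghat e \<alpha> i = (Gi \<alpha> i * (\<Prod>l\<in>{..<e}-{i}. [:- \<alpha> l, 1:])) div Gi \<alpha> i"
    unfolding Ghat_def by simp
  also have "\<dots> = (\<Prod>l\<in>{..<e}-{i}. [:- \<alpha> l, 1:])"
    by (rule nonzero_mult_div_cancel_left) (simp add: Gi_def)
  finally show ?thesis .
qed

lemma poly_Ghat: "i < e \<Longrightarrow> j < e \<Longrightarrow> (poly (Ghat e \<alpha> i) (\<alpha> j) = 0) \<longleftrightarrow> i \<noteq> j"
proof -
  assume i: "i < e" and j: "j < e"
  have eq: "poly (Ghat e \<alpha> i) (\<alpha> j) = (\<Prod>l\<in>{..<e}-{i}. \<alpha> j - \<alpha> l)"
    using i by (simp add: Ghat_eq poly_prod)
  show ?thesis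
  proof (cases "i = j")
    case True
    have "\<alpha> j - \<alpha> l \<noteq> 0" if "l \<in> {..<e}-{i}" for l
    proof
      assume "\<alpha> j - \<alpha> l = 0"
      then have "\<alpha> j = \<alpha> l" by simp
      with inj j that True show False by (auto dest: inj_onD)
    qed
    then have "(\<Prod>l\<in>{..<e}-{i}. \<alpha> j - \<alpha> l) \<noteq> 0"
      by (subst prod_zero_iff) auto
    then show ?thesis using eq True by simp
  next
    case False
    have "(\<Prod>l\<in>{..<e}-{i}. \<alpha> j - \<alpha> l) = 0"
      by (rule prod_zero) (use False j in auto)
    then show ?thesis using eq False by simp
  qed
qed

lemma hcoef_ex: "i < e \<Longrightarrow> \<exists>z. z * Gi \<alpha> i + hcoef e \<alpha> i * Ghat e \<alpha> i = 1"
proof -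
  assume i: "i < e"
  define c where "c = poly (Ghat e \<alpha> i) (\<alpha> i)"
  have c: "c \<noteq> 0" using poly_Ghat[OF i i] c_def by simp
  define h where "h = [:inverse c:]"
  have "poly (1 - h * Ghat e \<alpha> i) (\<alpha> i) = 0" using c by (simp add: h_def c_def)
  then have "Gi \<alpha> i dvd (1 - h * Ghat e \<alpha> i)" unfolding Gi_def
    by (rule poly_eq_0_iff_dvd[THEN iffD1])
  then obtain z where z: "1 - h * Ghat e \<alpha> i = Gi \<alpha> i * z" by (auto simp: dvd_def)
  have "z * Gi \<alpha> i + h * Ghat e \<alpha> i = (1 - h * Ghat e \<alpha> i) + h * Ghat e \<alpha> i"
    by (simp only: z mult.commute)
  also have "\<dots> = 1" by simp
  finally have "\<exists>h z. z * Gi \<alpha> i + h * Ghat e \<alpha> i = 1" by blast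
  then show ?thesis unfolding hcoef_def by (rule someI_ex)
qed

lemma poly_mu: "i < e \<Longrightarrow> j < e \<Longrightarrow> poly (mu e \<alpha> i) (\<alpha> j) = (if i = j then 1 else 0)"
proof -
  assume i: "i < e" and j: "j < e"
  obtain z where z: "z * Gi \<alpha> i + hcoef e \<alpha> i * Ghat e \<alpha> i = 1" using hcoef_ex[OF i] by blast
  have pm: "poly (mu e \<alpha> i) (\<alpha> j) = poly (hcoef e \<alpha> i) (\<alpha> j) * poly (Ghat e \<alpha> i) (\<alpha> j)"
    unfolding mu_def using j by (simp add: poly_mod_umod)
  show ?thesis
  proof (cases "i = j")
    case True
    have "poly (z * Gi \<alpha> i + hcoef e \<alpha> i * Ghat e \<alpha> i) (\<alpha> i) = 1" using z by simp
    then show ?thesis using pm True by (simp add: Gi_def)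
  next
    case False
    then show ?thesis using pm poly_Ghat[OF i j] by simp
  qed
qed

lemma inR_mu: "in_R e (mu e \<alpha> i)" unfolding mu_def by (rule inR_mod)

lemma poly_combo: "j < e \<Longrightarrow> length s = e \<Longrightarrow>
   poly ((\<Sum>i<e. smult (s ! i) (mu e \<alpha> i)) mod umod e) (\<alpha> j) = s ! j"
proof -
  assume j: "j < e" and s: "length s = e"
  have "poly ((\<Sum>i<e. smult (s ! i) (mu e \<alpha> i)) mod umod e) (\<alpha> j)
      = (\<Sum>i<e. s ! i * (if i = j then 1 else 0))"
    using j by (simp add: poly_mod_umod poly_sum poly_mu)
  also have "\<dots> = s ! j" using j by (simp add: if_distrib sum.delta cong: if_cong)
  finally show ?thesis .
qed

lemma coords_eq: "in_R e (r::'a poly) \<Longrightarrow> coords e \<alpha> r = map (\<lambda>i. poly r (\<alpha> i)) [0..<e]"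
  unfolding coords_def
proof (rule the_equality)
  assume r: "in_R e r"
  let ?s = "map (\<lambda>i. poly r (\<alpha> i)) [0..<e]"
  have "poly ((\<Sum>i<e. smult (?s ! i) (mu e \<alpha> i)) mod umod e) (\<alpha> j) = ?s ! j" if "j < e" for j
    by (rule poly_combo) (use that in auto)
  then show "length ?s = e \<and> r = (\<Sum>i<e. smult (?s ! i) (mu e \<alpha> i)) mod umod e"
    using r by (auto intro!: inR_eq inR_mod)
  fix s assume H: "length s = e \<and> r = (\<Sum>i<e. smult (s ! i) (mu e \<alpha> i)) mod umod e"
  show "s = ?s"
  proof (rule nth_equalityI)
    show "length s = length ?s" using H by simp
    fix j assume "j < length s"
    hence j: "j < e" using H by simp
    have "poly r (\<alpha> j) = s ! j" using poly_combo[OF j, of s] H by simp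
    then show "s ! j = ?s ! j" using j by simp
  qed
qed

lemma coords_nth: "in_R e (r::'a poly) \<Longrightarrow> i < e \<Longrightarrow> coords e \<alpha> r ! i = poly r (\<alpha> i)"
  by (simp add: coords_eq)

end

lemma sum_blocks: "(\<Sum>idx<e*n. g idx) = (\<Sum>j<n. \<Sum>l<e. g (j*e + l :: nat))"
proof -
  have "(\<Sum>j<n. \<Sum>l<e. g (j*e + l)) = (\<Sum>j<n. sum g {j*e..<j*e+e})"
  proof (rule sum.cong[OF refl])
    fix j
    have "sum g {0 + j*e..<e + j*e} = (\<Sum>l = 0..<e. g (l + j*e))"
      by (rule sum.shift_bounds_nat_ivl)
    then show "(\<Sum>l<e. g (j*e + l)) = sum g {j*e..<j*e+e}"
      by (simp add: atLeast0LessThan add.commute)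
  qed
  also have "\<dots> = sum g {..<n*e}" by (rule sum.nat_group)
  also have "\<dots> = sum g {..<e*n}" by (simp only: mult.commute)
  finally show ?thesis by simp
qed

locale gray_setup = setup_R e \<alpha> for e and \<alpha> :: "nat \<Rightarrow> 'a::field" +
  fixes M N :: "nat \<Rightarrow> nat \<Rightarrow> 'a" and \<gamma> :: 'a and n :: nat
  assumes NM: "\<forall>i<e. \<forall>j<e. (\<Sum>l<e. N i l * M l j) = (if i = j then 1 else 0)"
    and g0: "\<gamma> \<noteq> 0"
    and MMT: "\<forall>i<e. \<forall>j<e. (\<Sum>l<e. M i l * M j l) = (if i = j then \<gamma> else 0)"
begin

abbreviation "phi \<equiv> gray e \<alpha> M n"
abbreviation "RW \<equiv> (Rwords e n :: (nat \<Rightarrow> 'a poly) set)"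

lemma RW_inR: "c \<in> RW \<Longrightarrow> in_R e (c j)" unfolding Rwords_def by auto
lemma RW_0: "c \<in> RW \<Longrightarrow> j \<ge> n \<Longrightarrow> c j = 0" unfolding Rwords_def by auto

lemma gray_eq: "c \<in> RW \<Longrightarrow> phi c = (\<lambda>idx. if idx < e*n then
    (\<Sum>i<e. poly (c (idx div e)) (\<alpha> i) * M i (idx mod e)) else 0)"
  unfolding gray_def by (intro ext if_cong refl sum.cong) (auto simp: coords_nth RW_inR)

lemma gray_block: "c \<in> RW \<Longrightarrow> j < n \<Longrightarrow> l < e \<Longrightarrow>
   phi c (j*e + l) = (\<Sum>i<e. poly (c j) (\<alpha> i) * M i l)"
proof -
  assume c: "c \<in> RW" and j: "j < n" and l: "l < e"
  have lt: "j*e + l < e*n"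
  proof -
    have "j*e + l < j*e + e" using l by simp
    also have "\<dots> = (Suc j) * e" by simp
    also have "\<dots> \<le> n * e" using j by (intro mult_right_mono) auto
    finally show ?thesis by (metis mult.commute)
  qed
  have "(j*e + l) div e = j" "(j*e+l) mod e = l" using l by auto
  then show ?thesis using lt by (simp add: gray_eq[OF c])
qed

lemma gray_Fwords: "phi c \<in> Fwords (e*n)"
  unfolding gray_def Fwords_def by auto

lemma gray_out: "\<not> idx < e*n \<Longrightarrow> phi c idx = 0"
  unfolding gray_def by auto

lemma gray_idx: "idx < e*n \<Longrightarrow> idx div e < n \<and> idx mod e < e \<and> idx = (idx div e) * e + idx mod e"
proof -
  assume "idx < e*n"
  then have "e > 0" by (cases e) auto
  then show ?thesis using \<open>idx < e*n\<close>
    by (auto simp: div_less_iff_less_mult mult.commute)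
qed

lemma gray_ext: "(\<And>j l. j < n \<Longrightarrow> l < e \<Longrightarrow> f (j*e+l) = g (j*e+l)) \<Longrightarrow>
   (\<And>idx. \<not> idx < e*n \<Longrightarrow> f idx = g idx) \<Longrightarrow> f = g"
  by (rule ext) (metis gray_idx)

lemma gray_inj: "c \<in> RW \<Longrightarrow> d \<in> RW \<Longrightarrow> phi c = phi d \<Longrightarrow> c = d"
proof (rule ext)
  fix j assume c: "c \<in> RW" and d: "d \<in> RW" and eq: "phi c = phi d"
  show "c j = d j"
  proof (cases "j < n")
    case False then show ?thesis using RW_0[OF c, of j] RW_0[OF d, of j] by simp
  next
    case j: True
    have rec: "poly (x j) (\<alpha> k) = inverse \<gamma> * (\<Sum>l<e. phi x (j*e+l) * M k l)"
      if x: "x \<in> RW" and k: "k < e" for x k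
    proof -
      have "(\<Sum>l<e. phi x (j*e+l) * M k l) = (\<Sum>l<e. \<Sum>i<e. poly (x j) (\<alpha> i) * (M i l * M k l))"
        using x j by (simp add: gray_block sum_distrib_right mult.assoc)
      also have "\<dots> = (\<Sum>i<e. poly (x j) (\<alpha> i) * (\<Sum>l<e. M i l * M k l))"
        by (subst sum.swap) (simp add: sum_distrib_left)
      also have "\<dots> = (\<Sum>i<e. poly (x j) (\<alpha> i) * (if i = k then \<gamma> else 0))"
        using MMT k by (intro sum.cong) auto
      also have "\<dots> = poly (x j) (\<alpha> k) * \<gamma>" using k by (simp add: if_distrib cong: if_cong)
      finally show ?thesis using g0 by (simp add: field_simps)
    qed
    show ?thesis
      by (rule inR_eq) (use RW_inR c d rec eq in auto)
  qed
qed

lemma gray_surj: "y \<in> Fwords (e*n) \<Longrightarrow> \<exists>d\<in>RW. phi d = y"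
proof -
  assume y: "y \<in> Fwords (e*n)"
  define v where "v j i = (\<Sum>k<e. y (j*e+k) * N k i)" for j i
  define d where "d j = (if j < n then (\<Sum>i<e. smult (map (v j) [0..<e] ! i) (mu e \<alpha> i)) mod umod e else 0)" for j
  have dR: "d \<in> RW" unfolding Rwords_def d_def by (auto simp: inR_mod inR_0)
  have pd: "poly (d j) (\<alpha> i) = v j i" if "j < n" "i < e" for j i
    using poly_combo[of i "map (v j) [0..<e]"] that by (simp add: d_def)
  have "phi d = y"
  proof (rule gray_ext)
    fix j l assume j: "j < n" and l: "l < e"
    have "phi d (j*e+l) = (\<Sum>i<e. v j i * M i l)" using gray_block[OF dR j l] pd j
      by (intro trans[OF gray_block[OF dR j l]] sum.cong) auto
    also have "\<dots> = (\<Sum>k<e. y (j*e+k) * (\<Sum>i<e. N k i * M i l))"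
      unfolding v_def by (simp add: sum_distrib_right sum_distrib_left mult.assoc) (rule sum.swap)
    also have "\<dots> = (\<Sum>k<e. y (j*e+k) * (if k = l then 1 else 0))"
      using NM l by (intro sum.cong) auto
    also have "\<dots> = y (j*e+l)" using l by (simp add: if_distrib cong: if_cong)
    finally show "phi d (j*e+l) = y (j*e+l)" .
  next
    fix idx assume "\<not> idx < e*n"
    then show "phi d idx = y idx" using y gray_out by (simp add: Fwords_def)
  qed
  with dR show ?thesis by blast
qed

end

context gray_setup
begin

lemma RW_add: "c \<in> RW \<Longrightarrow> d \<in> RW \<Longrightarrow> c + d \<in> RW"
  unfolding Rwords_def by (auto intro: inR_add)

lemma RW_diff: "c \<in> RW \<Longrightarrow> d \<in> RW \<Longrightarrow> c - d \<in> RW"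
  unfolding Rwords_def by (auto intro: inR_diff)

lemma RW_zero: "0 \<in> RW"
  unfolding Rwords_def by (auto intro: inR_0)

lemma gray_add: "c \<in> RW \<Longrightarrow> d \<in> RW \<Longrightarrow> phi (c + d) = phi c + phi d"
  by (rule ext) (simp add: gray_eq RW_add sum.distrib distrib_right)

lemma gray_diff: "c \<in> RW \<Longrightarrow> d \<in> RW \<Longrightarrow> phi (c - d) = phi c - phi d"
  by (rule ext) (simp add: gray_eq RW_diff sum_subtractf left_diff_distrib)

lemma gray_zero: "phi 0 = 0"
  by (rule ext) (simp add: gray_eq RW_zero)

definition "mulR r c = (\<lambda>j. (r * c j) mod umod e)"

lemma RW_mulR: "c \<in> RW \<Longrightarrow> mulR r c \<in> RW"
  unfolding Rwords_def mulR_def by (auto intro: inR_mod)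

lemma poly_mulR: "i < e \<Longrightarrow> poly (mulR r c j) (\<alpha> i) = poly r (\<alpha> i) * poly (c j) (\<alpha> i)"
  unfolding mulR_def by (simp add: poly_mod_umod)

lemma gray_scale: "c \<in> RW \<Longrightarrow> phi (mulR [:a:] c) = fscale a (phi c)"
  unfolding fscale_def
  by (rule ext) (simp add: gray_eq RW_mulR poly_mulR sum_distrib_left mult.assoc)

lemma ipF: "c \<in> RW \<Longrightarrow> d \<in> RW \<Longrightarrow>
  (\<Sum>idx<e*n. phi c idx * phi d idx) = \<gamma> * (\<Sum>i<e. \<Sum>j<n. poly (c j) (\<alpha> i) * poly (d j) (\<alpha> i))"
proof -
  assume c: "c \<in> RW" and d: "d \<in> RW"
  have "(\<Sum>idx<e*n. phi c idx * phi d idx) = (\<Sum>j<n. \<Sum>l<e. phi c (j*e+l) * phi d (j*e+l))"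
    by (rule sum_blocks)
  also have "\<dots> = (\<Sum>j<n. \<Sum>l<e. (\<Sum>i<e. poly (c j) (\<alpha> i) * M i l) * (\<Sum>k<e. poly (d j) (\<alpha> k) * M k l))"
    by (intro sum.cong refl) (simp add: gray_block c d)
  also have "\<dots> = (\<Sum>j<n. \<Sum>i<e. \<Sum>k<e. poly (c j) (\<alpha> i) * poly (d j) (\<alpha> k) * (\<Sum>l<e. M i l * M k l))"
  proof (rule sum.cong[OF refl])
    fix j
    show "(\<Sum>l<e. (\<Sum>i<e. poly (c j) (\<alpha> i) * M i l) * (\<Sum>k<e. poly (d j) (\<alpha> k) * M k l)) =
          (\<Sum>i<e. \<Sum>k<e. poly (c j) (\<alpha> i) * poly (d j) (\<alpha> k) * (\<Sum>l<e. M i l * M k l))"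
    proof -
      have "(\<Sum>l<e. (\<Sum>i<e. poly (c j) (\<alpha> i) * M i l) * (\<Sum>k<e. poly (d j) (\<alpha> k) * M k l))
          = (\<Sum>l<e. \<Sum>i<e. \<Sum>k<e. (poly (c j) (\<alpha> i) * M i l) * (poly (d j) (\<alpha> k) * M k l))"
        by (simp only: sum_product)
      also have "\<dots> = (\<Sum>i<e. \<Sum>l<e. \<Sum>k<e. (poly (c j) (\<alpha> i) * M i l) * (poly (d j) (\<alpha> k) * M k l))"
        by (rule sum.swap)
      also have "\<dots> = (\<Sum>i<e. \<Sum>k<e. \<Sum>l<e. (poly (c j) (\<alpha> i) * M i l) * (poly (d j) (\<alpha> k) * M k l))"
        by (intro sum.cong refl sum.swap)
      also have "\<dots> = (\<Sum>i<e. \<Sum>k<e. poly (c j) (\<alpha> i) * poly (d j) (\<alpha> k) * (\<Sum>l<e. M i l * M k l))"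
        by (intro sum.cong refl) (simp add: sum_distrib_left mult_ac)
      finally show ?thesis .
    qed
  qed
  also have "\<dots> = (\<Sum>j<n. \<Sum>i<e. poly (c j) (\<alpha> i) * poly (d j) (\<alpha> i) * \<gamma>)"
  proof (intro sum.cong refl)
    fix j i assume i: "i \<in> {..<e}"
    have "(\<Sum>k<e. poly (c j) (\<alpha> i) * poly (d j) (\<alpha> k) * (\<Sum>l<e. M i l * M k l))
        = (\<Sum>k<e. poly (c j) (\<alpha> i) * poly (d j) (\<alpha> k) * (if i = k then \<gamma> else 0))"
      using MMT i by (intro sum.cong refl) auto
    also have "\<dots> = poly (c j) (\<alpha> i) * poly (d j) (\<alpha> i) * \<gamma>"
      using i by (simp add: if_distrib cong: if_cong)
    finally show "(\<Sum>k<e. poly (c j) (\<alpha> i) * poly (d j) (\<alpha> k) * (\<Sum>l<e. M i l * M k l))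
        = poly (c j) (\<alpha> i) * poly (d j) (\<alpha> i) * \<gamma>" .
  qed
  also have "\<dots> = \<gamma> * (\<Sum>i<e. \<Sum>j<n. poly (c j) (\<alpha> i) * poly (d j) (\<alpha> i))"
    by (subst sum.swap) (simp add: sum_distrib_left mult_ac)
  finally show ?thesis .
qed

lemma ipR: "c \<in> RW \<Longrightarrow> d \<in> RW \<Longrightarrow>
  ((\<Sum>j<n. c j * d j) mod umod e = 0) \<longleftrightarrow> (\<forall>i<e. (\<Sum>j<n. poly (c j) (\<alpha> i) * poly (d j) (\<alpha> i)) = 0)"
proof
  assume H: "(\<Sum>j<n. c j * d j) mod umod e = 0"
  show "\<forall>i<e. (\<Sum>j<n. poly (c j) (\<alpha> i) * poly (d j) (\<alpha> i)) = 0"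
  proof (intro allI impI)
    fix i assume i: "i < e"
    have "poly ((\<Sum>j<n. c j * d j) mod umod e) (\<alpha> i) = 0" using H by simp
    then have "poly (\<Sum>j<n. c j * d j) (\<alpha> i) = 0" by (simp only: poly_mod_umod[OF i])
    then show "(\<Sum>j<n. poly (c j) (\<alpha> i) * poly (d j) (\<alpha> i)) = 0" by (simp add: poly_sum)
  qed
next
  assume H: "\<forall>i<e. (\<Sum>j<n. poly (c j) (\<alpha> i) * poly (d j) (\<alpha> i)) = 0"
  show "(\<Sum>j<n. c j * d j) mod umod e = 0"
    by (rule inR_eq) (use H in \<open>auto simp: inR_mod inR_0 poly_mod_umod poly_sum\<close>)
qed

lemma ipF_mu: "c \<in> RW \<Longrightarrow> d \<in> RW \<Longrightarrow> i < e \<Longrightarrow>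
  (\<Sum>idx<e*n. phi (mulR (mu e \<alpha> i) c) idx * phi d idx) = \<gamma> * (\<Sum>j<n. poly (c j) (\<alpha> i) * poly (d j) (\<alpha> i))"
proof -
  assume c: "c \<in> RW" and d: "d \<in> RW" and i: "i < e"
  have "(\<Sum>idx<e*n. phi (mulR (mu e \<alpha> i) c) idx * phi d idx)
     = \<gamma> * (\<Sum>k<e. \<Sum>j<n. poly (mulR (mu e \<alpha> i) c j) (\<alpha> k) * poly (d j) (\<alpha> k))"
    by (rule ipF[OF RW_mulR[OF c] d])
  also have "(\<Sum>k<e. \<Sum>j<n. poly (mulR (mu e \<alpha> i) c j) (\<alpha> k) * poly (d j) (\<alpha> k))
     = (\<Sum>k<e. if k = i then (\<Sum>j<n. poly (c j) (\<alpha> i) * poly (d j) (\<alpha> i)) else 0)"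
    by (intro sum.cong refl) (auto simp: poly_mulR poly_mu i)
  also have "\<dots> = (\<Sum>j<n. poly (c j) (\<alpha> i) * poly (d j) (\<alpha> i))"
    using i by simp
  finally show ?thesis .
qed

end

interpretation fs: vector_space "fscale :: 'a::field \<Rightarrow> (nat \<Rightarrow> 'a) \<Rightarrow> (nat \<Rightarrow> 'a)"
  by unfold_locales (auto simp: fscale_def fun_eq_iff algebra_simps)

lemma card_subspace:
  fixes D :: "(nat \<Rightarrow> 'a::{finite,field}) set"
  assumes lin: "F_linear_code N D" and fin: "finite D"
  shows "card D = CARD('a) ^ F_dim D"
proof -
  have sub: "fs.subspace D"
    using lin unfolding fs.subspace_def F_linear_code_def by auto
  obtain B where B: "B \<subseteq> D" "fs.independent B" "D \<subseteq> fs.span B" "card B = fs.dim D"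
    by (rule fs.basis_exists)
  have finB: "finite B" using B(1) fin by (rule finite_subset)
  have spanB: "fs.span B = D" by (rule fs.span_subspace[OF B(1) B(3) sub])
  define f where "f u = (\<Sum>v\<in>B. fscale (u v) v)" for u :: "(nat \<Rightarrow> 'a) \<Rightarrow> 'a"
  have img: "D = f ` (B \<rightarrow>\<^sub>E UNIV)"
  proof
    show "D \<subseteq> f ` (B \<rightarrow>\<^sub>E UNIV)"
    proof
      fix x assume "x \<in> D"
      then have "x \<in> range f" using spanB fs.span_finite[OF finB] unfolding f_def by simp
      then obtain u where x: "x = f u" by auto
      have "f u = f (restrict u B)" unfolding f_def by (intro sum.cong) auto
      then show "x \<in> f ` (B \<rightarrow>\<^sub>E UNIV)" using x by auto
    qed
  next
    show "f ` (B \<rightarrow>\<^sub>E UNIV) \<subseteq> D"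
      using spanB fs.span_finite[OF finB] unfolding f_def by auto
  qed
  have inj: "inj_on f (B \<rightarrow>\<^sub>E UNIV)"
  proof (rule inj_onI)
    fix u u' assume u: "u \<in> B \<rightarrow>\<^sub>E UNIV" and u': "u' \<in> B \<rightarrow>\<^sub>E UNIV" and eq: "f u = f u'"
    have "(\<Sum>v\<in>B. fscale (u v - u' v) v) = f u - f u'"
      unfolding f_def by (simp add: fs.scale_left_diff_distrib sum_subtractf)
    then have "(\<Sum>v\<in>B. fscale (u v - u' v) v) = 0" using eq by simp
    then have "\<forall>v\<in>B. u v - u' v = 0"
      using fs.independentD[OF B(2) finB order_refl, of "\<lambda>v. u v - u' v"] by blast
    then show "u = u'" using u u' by (intro PiE_ext) auto
  qed
  have "card D = card (B \<rightarrow>\<^sub>E (UNIV :: 'a set))" using img inj by (simp add: card_image)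
  also have "\<dots> = CARD('a) ^ card B" using finB by (simp add: card_PiE)
  finally show ?thesis using B(4) by (simp add: F_dim_def)
qed

theorem theorem2p4:
  fixes p m e t n k :: nat
    and \<alpha> :: "nat \<Rightarrow> 'a::{finite,field}"
    and M :: "nat \<Rightarrow> nat \<Rightarrow> 'a"
    and \<gamma> :: 'a
    and C :: "(nat \<Rightarrow> 'a poly) set"
  assumes "prime p" and "odd p" and "CARD('a) = p ^ m"
    and "CARD('a) = e * t + 1" and "e \<ge> 2" and "t \<ge> 1"
    and "inj_on \<alpha> {..<e}"
    and "umod e = (\<Prod>i<e. [:- \<alpha> i, 1:])"
    and "\<exists>N::nat \<Rightarrow> nat \<Rightarrow> 'a. \<forall>i<e. \<forall>j<e.
            (\<Sum>l<e. N i l * M l j) = (if i = j then 1 else 0)"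
    and "\<gamma> \<noteq> 0"
    and "\<forall>i<e. \<forall>j<e. (\<Sum>l<e. M i l * M j l) = (if i = j then \<gamma> else 0)"
    and "R_linear_code e n C"
    and "card C = CARD('a) ^ (e * k)"
  shows "(F_linear_code (e * n) (gray e \<alpha> M n ` C)
          \<and> F_dim (gray e \<alpha> M n ` C) = e * k
          \<and> min_dist (e * n) (gray e \<alpha> M n ` C) = gray_dist e \<alpha> M n C)
       \<and> gray e \<alpha> M n ` (R_dual e n C) = F_dual (e * n) (gray e \<alpha> M n ` C)
       \<and> (C \<subseteq> R_dual e n C \<longrightarrow>
            F_linear_code (e * n) (gray e \<alpha> M n ` C)
            \<and> gray e \<alpha> M n ` C \<subseteq> F_dual (e * n) (gray e \<alpha> M n ` C))
       \<and> (gray e \<alpha> M n ` C = F_dual (e * n) (gray e \<alpha> M n ` C) \<longleftrightarrow> C = R_dual e n C)"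
proof -
  obtain N :: "nat \<Rightarrow> nat \<Rightarrow> 'a" where N: "\<forall>i<e. \<forall>j<e. (\<Sum>l<e. N i l * M l j) = (if i = j then 1 else 0)"
    using assms(9) by blast
  interpret G: gray_setup e \<alpha> M N \<gamma> n
    by unfold_locales (use assms N in auto)
  let ?phi = "gray e \<alpha> M n"
  let ?RW = "Rwords e n :: (nat \<Rightarrow> 'a poly) set"
  have CR: "C \<subseteq> ?RW" and Cne: "C \<noteq> {}"
    and Cadd: "\<And>c d. c \<in> C \<Longrightarrow> d \<in> C \<Longrightarrow> c + d \<in> C"
    and Cmul: "\<And>r c. in_R e r \<Longrightarrow> c \<in> C \<Longrightarrow> G.mulR r c \<in> C"
    using assms(12) unfolding R_linear_code_def G.mulR_def by auto
  have finC: "finite C"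
  proof (rule card_ge_0_finite)
    show "card C > 0" using assms(13) by simp
  qed
  have injC: "inj_on ?phi C" using CR G.gray_inj by (meson inj_onI subsetD)
  have injR: "inj_on ?phi ?RW" using G.gray_inj by (meson inj_onI)
  have C0: "0 \<in> C"
  proof -
    obtain c where c: "c \<in> C" using Cne by blast
    have "G.mulR 0 c \<in> C" by (rule Cmul[OF G.inR_0 c])
    moreover have "G.mulR 0 c = 0" unfolding G.mulR_def by (rule ext) simp
    ultimately show ?thesis by simp
  qed
  have FL: "F_linear_code (e * n) (?phi ` C)"
    unfolding F_linear_code_def
  proof (intro conjI ballI allI)
    show "?phi ` C \<subseteq> Fwords (e * n)" using G.gray_Fwords by blast
    show "0 \<in> ?phi ` C" using C0 G.gray_zero by (metis image_eqI)
  next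
    fix x y assume x: "x \<in> ?phi ` C" and y: "y \<in> ?phi ` C"
    then obtain c d where c: "c \<in> C" "x = ?phi c" and d: "d \<in> C" "y = ?phi d" by blast
    have cR: "c \<in> ?RW" "d \<in> ?RW" using CR c(1) d(1) by auto
    have "x + y = ?phi (c + d)" using G.gray_add[OF cR] c(2) d(2) by simp
    then show "x + y \<in> ?phi ` C" using Cadd[OF c(1) d(1)] by blast
  next
    fix a x assume x: "x \<in> ?phi ` C"
    then obtain c where c: "c \<in> C" "x = ?phi c" by blast
    have cR: "c \<in> ?RW" using CR c(1) by auto
    have "fscale a x = ?phi (G.mulR [:a:] c)" using G.gray_scale[OF cR, of a] c(2) by simp
    then show "fscale a x \<in> ?phi ` C" using Cmul[OF G.inR_const c(1)] by blast
  qed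
  have dim: "F_dim (?phi ` C) = e * k"
  proof -
    have "CARD('a) ^ F_dim (?phi ` C) = card (?phi ` C)"
      using card_subspace[OF FL] finC by (metis finite_imageI)
    also have "\<dots> = card C" using injC by (simp add: card_image)
    also have "\<dots> = CARD('a) ^ (e * k)" by (rule assms(13))
    finally have "CARD('a) ^ F_dim (?phi ` C) = CARD('a) ^ (e * k)" .
    moreover have "1 < CARD('a)"
    proof -
      have "1 * 1 \<le> e * t" using assms(5) assms(6) by (intro mult_le_mono) auto
      then show ?thesis using assms(4) by simp
    qed
    ultimately show ?thesis by (simp add: power_inject_exp)
  qed
  have md: "min_dist (e * n) (?phi ` C) = gray_dist e \<alpha> M n C"
  proof -
    have "{hamming_weight (e * n) (x - y) | x y. x \<in> ?phi ` C \<and> y \<in> ?phi ` C \<and> x \<noteq> y}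
        = {gray_weight e \<alpha> M n (c - c') | c c'. c \<in> C \<and> c' \<in> C \<and> c \<noteq> c'}"
    proof (intro set_eqI iffI)
      fix w assume "w \<in> {hamming_weight (e * n) (x - y) | x y. x \<in> ?phi ` C \<and> y \<in> ?phi ` C \<and> x \<noteq> y}"
      then obtain c c' where cc: "c \<in> C" "c' \<in> C" "?phi c \<noteq> ?phi c'"
          "w = hamming_weight (e * n) (?phi c - ?phi c')" by blast
      then have "c \<noteq> c'" by blast
      moreover have "w = gray_weight e \<alpha> M n (c - c')"
        using cc G.gray_diff[of c c'] CR unfolding gray_weight_def by (simp add: subset_iff)
      ultimately show "w \<in> {gray_weight e \<alpha> M n (c - c') | c c'. c \<in> C \<and> c' \<in> C \<and> c \<noteq> c'}"
        using cc by blast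
    next
      fix w assume "w \<in> {gray_weight e \<alpha> M n (c - c') | c c'. c \<in> C \<and> c' \<in> C \<and> c \<noteq> c'}"
      then obtain c c' where cc: "c \<in> C" "c' \<in> C" "c \<noteq> c'"
          "w = gray_weight e \<alpha> M n (c - c')" by blast
      then have "?phi c \<noteq> ?phi c'" using injC by (meson inj_onD)
      moreover have "w = hamming_weight (e * n) (?phi c - ?phi c')"
        using cc G.gray_diff[of c c'] CR unfolding gray_weight_def by (simp add: subset_iff)
      ultimately show "w \<in> {hamming_weight (e * n) (x - y) | x y. x \<in> ?phi ` C \<and> y \<in> ?phi ` C \<and> x \<noteq> y}"
        using cc by blast
    qed
    then show ?thesis unfolding min_dist_def gray_dist_def by simp
  qed
  have dual: "?phi ` (R_dual e n C) = F_dual (e * n) (?phi ` C)"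
  proof (intro set_eqI iffI)
    fix y assume "y \<in> ?phi ` (R_dual e n C)"
    then obtain d where d: "d \<in> ?RW" "\<forall>c\<in>C. (\<Sum>j<n. c j * d j) mod umod e = 0" "y = ?phi d"
      unfolding R_dual_def by blast
    have "(\<Sum>i<e * n. x i * y i) = 0" if x: "x \<in> ?phi ` C" for x
    proof -
      obtain c where c: "c \<in> C" "x = ?phi c" using x by blast
      have "\<forall>i<e. (\<Sum>j<n. poly (c j) (\<alpha> i) * poly (d j) (\<alpha> i)) = 0"
        using G.ipR[of c d] c CR d by auto
      then show ?thesis using G.ipF[of c d] c CR d by auto
    qed
    then show "y \<in> F_dual (e * n) (?phi ` C)" unfolding F_dual_def using d G.gray_Fwords by auto
  next
    fix y assume y: "y \<in> F_dual (e * n) (?phi ` C)"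
    then obtain d where d: "d \<in> ?RW" "?phi d = y" using G.gray_surj unfolding F_dual_def by blast
    have "(\<Sum>j<n. c j * d j) mod umod e = 0" if c: "c \<in> C" for c
    proof -
      have "(\<Sum>j<n. poly (c j) (\<alpha> i) * poly (d j) (\<alpha> i)) = 0" if i: "i < e" for i
      proof -
        have mc: "G.mulR (mu e \<alpha> i) c \<in> C" by (rule Cmul[OF G.inR_mu c])
        have "(\<Sum>idx<e*n. ?phi (G.mulR (mu e \<alpha> i) c) idx * y idx) = 0"
          using y mc unfolding F_dual_def by blast
        then have "\<gamma> * (\<Sum>j<n. poly (c j) (\<alpha> i) * poly (d j) (\<alpha> i)) = 0"
          using G.ipF_mu[of c d i] c CR d i by auto
        then show ?thesis using assms(10) by simp
      qed
      then show ?thesis using G.ipR[of c d] c CR d by auto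
    qed
    then have "d \<in> R_dual e n C" unfolding R_dual_def using d by auto
    then show "y \<in> ?phi ` (R_dual e n C)" using d by blast
  qed
  have RdR: "R_dual e n C \<subseteq> ?RW" unfolding R_dual_def by auto
  have sd: "(?phi ` C = F_dual (e * n) (?phi ` C)) \<longleftrightarrow> C = R_dual e n C"
  proof
    assume "?phi ` C = F_dual (e * n) (?phi ` C)"
    then have "?phi ` C = ?phi ` (R_dual e n C)" using dual by simp
    then show "C = R_dual e n C" using inj_on_image_eq_iff[OF injR CR RdR] by blast
  next
    assume "C = R_dual e n C"
    then show "?phi ` C = F_dual (e * n) (?phi ` C)" using dual by simp
  qed
  show ?thesis
    using FL dim md dual sd by blast
qed

end
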